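(* Let $m\in\mathbb Z\setminus\{0\}$ and let $\mathfrak a\subseteq\mathcal O_K$ be an integral ideal coprime to $D$. Then for all $s\in\mathbb C$ \[ \sum_{\substack{d\mid m\\ d>0}} d^s\prod_{p\mid D}\big(\chi_{D(p)}(d)+\chi_{D(p)}(N(\mathfrak a)m/d)\big) =\sum_{D_1D_2=D}\chi_{D_1}(m_{D_2})\,\chi_{D_2}(N(\mathfrak a)m_0m_{D_1})\,m_{D_2}^{\,s}\prod_{p\nmid D}\frac{1-(\chi_D(p)p^s)^{\nu_p(m)+1}}{1-\chi_D(p)p^s}, \] where the sum on the right runs over all ordered factorizations $D=D_1D_2$ into two discriminants (integers $D_1,D_2\equiv 1\pmod 4$, possibly equal to $1$), $m_{D_i}=\prod_{p\mid D_i}p^{\nu_p(m)}$, $m_0=m/(m_{D_1}m_{D_2})$, and the last product runs over primes $p\nmid D$ (all but finitely many factors equal $1$).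
   Context: Let $K$ be a real quadratic number field whose discriminant $D$ is odd (so $D>0$ squarefree, $D\equiv1\pmod4$), with ring of integers $\mathcal O_K$; $N(\mathfrak a)$ denotes the absolute norm of an ideal. An ideal is coprime to $D$ if no prime ideal dividing $D\mathcal O_K$ divides it. $\nu_p$ is the $p$-adic valuation. For a discriminant $E\equiv 1\pmod 4$, $\chi_E(n)=\left(\frac{E}{n}\right)$ is the Kronecker symbol (in particular $\chi_D$). For each prime $p\mid D$ let $D(p)\in\{p,-p\}$ be the one with $D(p)\equiv1\pmod4$. *)

theory Defs
  imports "HOL-Analysis.Analysis" "HOL-Number_Theory.Number_Theory" "HOL-Computational_Algebra.Squarefree"
begin

text \<open>Ring of integers of K = Q(sqrt D), D = 1 mod 4, realised inside the reals:
  O_K = Z[(1 + sqrt D)/2].\<close>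
definition OK :: "int \<Rightarrow> real set" where
  "OK D = {of_int a + of_int b * ((1 + sqrt (of_int D)) / 2) | a b. True}"

definition is_ideal :: "real set \<Rightarrow> real set \<Rightarrow> bool" where
  "is_ideal R I \<longleftrightarrow> I \<subseteq> R \<and> 0 \<in> I \<and> (\<forall>x\<in>I. \<forall>y\<in>I. x + y \<in> I)
     \<and> (\<forall>x\<in>I. - x \<in> I) \<and> (\<forall>r\<in>R. \<forall>x\<in>I. r * x \<in> I)"

definition prime_ideal :: "real set \<Rightarrow> real set \<Rightarrow> bool" where
  "prime_ideal R P \<longleftrightarrow> is_ideal R P \<and> P \<noteq> R
     \<and> (\<forall>x\<in>R. \<forall>y\<in>R. x * y \<in> P \<longrightarrow> x \<in> P \<or> y \<in> P)"

definition ideal_norm :: "real set \<Rightarrow> real set \<Rightarrow> nat" where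
  "ideal_norm R I = card {{y \<in> R. x - y \<in> I} | x. x \<in> R}"

text \<open>No prime ideal dividing (i.e. containing) D O_K divides (contains) the ideal I.\<close>
definition coprime_to_disc :: "int \<Rightarrow> real set \<Rightarrow> bool" where
  "coprime_to_disc D I \<longleftrightarrow>
     (\<forall>P. prime_ideal (OK D) P \<and> {of_int D * x | x. x \<in> OK D} \<subseteq> P \<longrightarrow> \<not> I \<subseteq> P)"

definition kron_prime :: "int \<Rightarrow> nat \<Rightarrow> int" where
  "kron_prime a p = (if p = 2 then (if even a then 0 else if a mod 8 = 1 \<or> a mod 8 = 7 then 1 else -1)
                     else Legendre a (int p))"

definition kronecker :: "int \<Rightarrow> int \<Rightarrow> int" where
  "kronecker a n = (if n = 0 then (if \<bar>a\<bar> = 1 then 1 else 0)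
     else (if n < 0 \<and> a < 0 then -1 else 1) *
          (\<Prod>p\<in>prime_factors (nat \<bar>n\<bar>). kron_prime a p ^ multiplicity p (nat \<bar>n\<bar>)))"

definition disc_part :: "nat \<Rightarrow> int" where
  "disc_part p = (if int p mod 4 = 1 then int p else - int p)"

definition m_part :: "int \<Rightarrow> int \<Rightarrow> nat" where
  "m_part E m = (\<Prod>p\<in>prime_factors (nat \<bar>E\<bar>). p ^ multiplicity p (nat \<bar>m\<bar>))"

end

theory Submission
  imports Defs
begin


lemma kp_range: "kron_prime a p \<in> {-1,0,1}"
  unfolding kron_prime_def Legendre_def by auto

lemma kp_zero_iff: assumes "prime p" shows "kron_prime a p = 0 \<longleftrightarrow> int p dvd a"
  using assms unfolding kron_prime_def Legendre_def by (auto simp: cong_0_iff)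

lemma small_dvd_eq:
  fixes x y z q :: int
  assumes "x \<in> {-1,0,1}" "y \<in> {-1,0,1}" "z \<in> {-1,0,1}" "3 \<le> q" "q dvd (x - y*z)"
  shows "x = y*z"
proof (rule ccontr)
  assume "x \<noteq> y*z"
  hence "\<bar>q\<bar> \<le> \<bar>x - y*z\<bar>" using assms(5) dvd_imp_le_int by simp
  moreover have "\<bar>x - y*z\<bar> \<le> 2" using assms(1-3) by (elim insertE) auto
  ultimately show False using assms(4) by simp
qed

lemma Legendre_mult:
  assumes p: "prime p" "2 < p"
  shows "Legendre (a*b) (int p) = Legendre a (int p) * Legendre b (int p)"
proof -
  let ?h = "(p - 1) div 2"
  have 1: "[Legendre (a*b) (int p) = (a*b) ^ ?h] (mod int p)" using euler_criterion[OF p] .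
  have 2: "[Legendre a (int p) * Legendre b (int p) = a ^ ?h * b ^ ?h] (mod int p)"
    using euler_criterion[OF p, of a] euler_criterion[OF p, of b] by (rule cong_mult)
  have "[Legendre (a*b) (int p) = Legendre a (int p) * Legendre b (int p)] (mod int p)"
    using 1 2 by (metis cong_sym cong_trans power_mult_distrib)
  hence d: "int p dvd (Legendre (a*b) (int p) - Legendre a (int p) * Legendre b (int p))"
    by (simp add: cong_iff_dvd_diff)
  have r: "\<And>x. Legendre x (int p) \<in> {-1,0,1}" unfolding Legendre_def by auto
  have "int p \<ge> 3" using p by linarith
  then show ?thesis using small_dvd_eq[OF r r r _ d] by simp
qed

lemma kp_mult: assumes "prime p" shows "kron_prime (a*b) p = kron_prime a p * kron_prime b p"
proof (cases "p = 2")
  case True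
  show ?thesis
  proof (cases "even a \<or> even b")
    case True then show ?thesis using \<open>p = 2\<close> by (auto simp: kron_prime_def)
  next
    case False
    have m: "(a*b) mod 8 = ((a mod 8)*(b mod 8)) mod 8" by (simp add: mod_mult_eq)
    have "a mod 8 = 1 \<or> a mod 8 = 3 \<or> a mod 8 = 5 \<or> a mod 8 = 7" using False by presburger
    moreover have "b mod 8 = 1 \<or> b mod 8 = 3 \<or> b mod 8 = 5 \<or> b mod 8 = 7" using False by presburger
    moreover have oa: "odd a" "odd b" "odd (a*b)" using False by auto
    ultimately show ?thesis using \<open>p = 2\<close>
      by (elim disjE) (simp_all add: kron_prime_def m)
  qed
next
  case False
  with assms have "2 < p" using prime_ge_2_nat[OF assms] by linarith
  then show ?thesis using False Legendre_mult[OF assms] by (simp add: kron_prime_def)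
qed

lemma kronecker_alt:
  assumes "n \<noteq> 0"
  shows "kronecker a n = (if n < 0 \<and> a < 0 then -1 else 1) *
           prod_mset (image_mset (\<lambda>p. kron_prime a p) (prime_factorization (nat \<bar>n\<bar>)))"
proof -
  have "prod_mset (image_mset (\<lambda>p. kron_prime a p) (prime_factorization (nat \<bar>n\<bar>)))
     = (\<Prod>p\<in>prime_factors (nat \<bar>n\<bar>). kron_prime a p ^ count (prime_factorization (nat \<bar>n\<bar>)) p)"
    by (rule image_prod_mset_multiplicity)
  also have "\<dots> = (\<Prod>p\<in>prime_factors (nat \<bar>n\<bar>). kron_prime a p ^ multiplicity p (nat \<bar>n\<bar>))"
    by (intro prod.cong refl) (simp add: count_prime_factorization_prime in_prime_factors_imp_prime)
  finally show ?thesis using assms by (simp add: kronecker_def)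
qed

lemma kron_one: "kronecker 1 n = 1"
proof (cases "n = 0")
  case False
  have "\<And>p. prime p \<Longrightarrow> kron_prime 1 p = 1"
  proof -
    fix p :: nat assume p: "prime p"
    have "\<not> [1 = 0] (mod int p)" using p by (simp add: cong_0_iff) (metis One_nat_def not_prime_1)
    moreover have "QuadRes (int p) 1" unfolding QuadRes_def by (rule exI[of _ 1]) simp
    ultimately show "kron_prime 1 p = 1" by (simp add: kron_prime_def Legendre_def)
  qed
  hence "image_mset (kron_prime 1) (prime_factorization (nat \<bar>n\<bar>))
       = image_mset (\<lambda>_. 1) (prime_factorization (nat \<bar>n\<bar>))"
    by (intro image_mset_cong) (auto simp: in_prime_factors_imp_prime)
  then show ?thesis using False by (simp add: kronecker_alt)
qed (simp add: kronecker_def)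

lemma kron_mult_top:
  assumes "a \<noteq> 0" "b \<noteq> 0"
  shows "kronecker (a*b) n = kronecker a n * kronecker b n"
proof (cases "n = 0")
  case True
  have "(\<bar>a*b\<bar> = 1) = (\<bar>a\<bar> = 1 \<and> \<bar>b\<bar> = 1)"
    using assms by (simp add: abs_mult pos_zmult_eq_1_iff)
  then show ?thesis using True by (simp add: kronecker_def)
next
  case False
  have pm: "prod_mset (image_mset (kron_prime (a*b)) (prime_factorization (nat \<bar>n\<bar>)))
     = prod_mset (image_mset (\<lambda>p. kron_prime a p * kron_prime b p) (prime_factorization (nat \<bar>n\<bar>)))"
    by (intro arg_cong[where f=prod_mset] image_mset_cong) (auto simp: kp_mult in_prime_factors_imp_prime)
  show ?thesis using False assms
    unfolding kronecker_alt[OF False] pm prod_mset.distrib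
    by (auto simp: mult_less_0_iff)
qed

lemma kron_mult_bot:
  assumes "x \<noteq> 0" "y \<noteq> 0"
  shows "kronecker a (x*y) = kronecker a x * kronecker a y"
proof -
  have xy: "x * y \<noteq> 0" using assms by simp
  have pf: "prime_factorization (nat \<bar>x*y\<bar>) = prime_factorization (nat \<bar>x\<bar>) + prime_factorization (nat \<bar>y\<bar>)"
    using assms by (simp add: nat_abs_mult_distrib prime_factorization_mult)
  show ?thesis using assms
    unfolding kronecker_alt[OF assms(1)] kronecker_alt[OF assms(2)] kronecker_alt[OF xy] pf
      image_mset_union prod_mset.union
    by (auto simp: mult_less_0_iff)
qed

lemma kron_zero: "\<bar>a\<bar> \<noteq> 1 \<Longrightarrow> kronecker a 0 = 0"
  by (simp add: kronecker_def)

lemma kron_mult_bot':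
  assumes "a mod 4 = 1"
  shows "kronecker a (x*y) = kronecker a x * kronecker a y"
proof (cases "x = 0 \<or> y = 0")
  case True
  show ?thesis
  proof (cases "a = 1")
    case True then show ?thesis by (simp add: kron_one)
  next
    case False
    have "\<bar>a\<bar> \<noteq> 1"
    proof
      assume "\<bar>a\<bar> = 1" hence "a = 1 \<or> a = -1" by linarith
      thus False using assms False by auto
    qed
    then show ?thesis using \<open>x = 0 \<or> y = 0\<close> by (auto simp: kron_zero)
  qed
qed (simp add: kron_mult_bot)

lemma kron_not_coprime:
  assumes "n \<noteq> 0" "\<not> coprime a n"
  shows "kronecker a n = 0"
proof -
  have g1: "gcd a n \<noteq> 1" using assms(2) by (simp add: coprime_iff_gcd_eq_1)
  have g0: "int (nat (gcd a n)) = gcd a n" by simp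
  have "nat (gcd a n) \<noteq> 1" using g1 g0 by (metis of_nat_1)
  then obtain p where p: "prime p" "p dvd nat (gcd a n)" using prime_factor_nat by blast
  have "int p dvd int (nat (gcd a n))" using p(2) int_dvd_int_iff by blast
  hence "int p dvd gcd a n" using g0 by simp
  hence pa: "int p dvd a" and pn: "int p dvd n" by auto
  have "int p dvd int (nat \<bar>n\<bar>)" using pn by simp
  hence "p dvd nat \<bar>n\<bar>" using int_dvd_int_iff by blast
  hence "p \<in># prime_factorization (nat \<bar>n\<bar>)" using p(1) assms(1)
    by (simp add: in_prime_factors_iff)
  moreover have "kron_prime a p = 0" using kp_zero_iff[OF p(1)] pa by simp
  ultimately have "0 \<in># image_mset (kron_prime a) (prime_factorization (nat \<bar>n\<bar>))"
    by (metis image_eqI set_image_mset)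
  then show ?thesis using assms(1) by (simp add: kronecker_alt prod_mset_zero_iff)
qed

lemma prod_mset_pm1: "(\<forall>x\<in>#M. f x \<in> {-1,1::int}) \<Longrightarrow> prod_mset (image_mset f M) \<in> {-1,1}"
  by (induction M) auto

lemma kron_coprime_sq:
  assumes "coprime a n"
  shows "kronecker a n ^ 2 = 1"
proof (cases "n = 0")
  case True
  then have "\<bar>a\<bar> = 1" using assms by simp
  then show ?thesis using True by (simp add: kronecker_def)
next
  case False
  have "\<forall>p\<in>#prime_factorization (nat \<bar>n\<bar>). kron_prime a p \<in> {-1,1}"
  proof
    fix p assume p: "p \<in># prime_factorization (nat \<bar>n\<bar>)"
    hence pp: "prime p" and "p dvd nat \<bar>n\<bar>" by (auto simp: in_prime_factors_iff)
    have "int p dvd int (nat \<bar>n\<bar>)" using \<open>p dvd nat \<bar>n\<bar>\<close> int_dvd_int_iff by blast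
    hence pn: "int p dvd n" by simp
    have "\<not> int p dvd a"
    proof
      assume "int p dvd a"
      hence "is_unit (int p)" using pn assms by (meson coprime_common_divisor)
      thus False using pp by (simp add: not_prime_1)
    qed
    then show "kron_prime a p \<in> {-1,1}" using kp_range[of a p] kp_zero_iff[OF pp, of a] by auto
  qed
  then have "prod_mset (image_mset (kron_prime a) (prime_factorization (nat \<bar>n\<bar>))) \<in> {-1,1}"
    by (rule prod_mset_pm1)
  then show ?thesis using False by (auto simp: kronecker_alt)
qed



lemma cpowr_mult_nat: "complex_of_nat (x*y) powr s = of_nat x powr s * of_nat y powr s"
  by (subst of_nat_mult) (rule powr_times_real, auto)

lemma gcd_prod_left:
  assumes "coprime (x::nat) y" "d1 dvd x" "d2 dvd y" shows "gcd (d1*d2) x = d1"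
  using assms by (metis coprime_mult_right_iff dvd_mult_div_cancel
    gcd_mult_left_right_cancel gcd_nat.order_iff)

lemma divsum_coprime:
  fixes f :: "nat \<Rightarrow> 'a::comm_semiring_1"
  assumes mult: "\<And>x y. f (x*y) = f x * f y" and cop: "coprime x y" and pos: "x > 0" "y > 0"
  shows "(\<Sum>d | d dvd x*y. f d) = (\<Sum>d | d dvd x. f d) * (\<Sum>d | d dvd y. f d)"
proof -
  have "(\<Sum>d | d dvd x. f d) * (\<Sum>d | d dvd y. f d)
      = (\<Sum>d1\<in>{d. d dvd x}. \<Sum>d2\<in>{d. d dvd y}. f d1 * f d2)"
    by (rule sum_product)
  also have "\<dots> = (\<Sum>(d1,d2)\<in>{d. d dvd x} \<times> {d. d dvd y}. f d1 * f d2)"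
    by (rule sum.cartesian_product)
  also have "\<dots> = (\<Sum>d | d dvd x*y. f d)"
  proof (rule sum.reindex_bij_witness[where j = "\<lambda>(d1,d2). d1*d2" and i = "\<lambda>d. (gcd d x, gcd d y)"])
    fix a assume a: "a \<in> {d. d dvd x} \<times> {d. d dvd y}"
    then obtain d1 d2 where a': "a = (d1,d2)" "d1 dvd x" "d2 dvd y" by auto
    have "gcd (d1*d2) x = d1" using gcd_prod_left[OF cop a'(2,3)] .
    moreover have "gcd (d1*d2) y = d2"
      using gcd_prod_left[of y x d2 d1] cop a'(2,3) by (simp add: coprime_commute mult.commute)
    ultimately show "(\<lambda>d. (gcd d x, gcd d y)) ((\<lambda>(d1,d2). d1*d2) a) = a" using a' by simp
    show "(\<lambda>(d1,d2). d1*d2) a \<in> {d. d dvd x*y}" using a' by (simp add: mult_dvd_mono)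
    show "f ((\<lambda>(d1,d2). d1*d2) a) = (\<lambda>(d1,d2). f d1 * f d2) a" using a' by (simp add: mult)
  next
    fix b assume b: "b \<in> {d. d dvd x*y}"
    then obtain d1 d2 where b': "b = d1*d2" "d1 dvd x" "d2 dvd y" using dvd_productE by blast
    have "gcd (d1*d2) x = d1" using gcd_prod_left[OF cop b'(2,3)] .
    moreover have "gcd (d1*d2) y = d2"
      using gcd_prod_left[of y x d2 d1] cop b'(2,3) by (simp add: coprime_commute mult.commute)
    ultimately show "(\<lambda>(d1,d2). d1*d2) ((\<lambda>d. (gcd d x, gcd d y)) b) = b" using b' by simp
    show "(\<lambda>d. (gcd d x, gcd d y)) b \<in> {d. d dvd x} \<times> {d. d dvd y}" by simp
  qed
  finally show ?thesis ..
qed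

lemma mult_power:
  fixes f :: "nat \<Rightarrow> 'a::comm_semiring_1"
  assumes mult: "\<And>x y. f (x*y) = f x * f y" and one: "f 1 = 1"
  shows "f (p ^ k) = f p ^ k"
  by (induction k) (simp_all add: one[unfolded One_nat_def] mult)

lemma divsum_prime_power:
  fixes f :: "nat \<Rightarrow> 'a::comm_semiring_1"
  assumes mult: "\<And>x y. f (x*y) = f x * f y" and one: "f 1 = 1" and p: "prime p"
  shows "(\<Sum>d | d dvd p^k. f d) = (\<Sum>i\<le>k. f p ^ i)"
proof -
  have "{d. d dvd p^k} = (\<lambda>i. p^i) ` {..k}" using divides_primepow_nat[OF p] by auto
  moreover have "inj_on (\<lambda>i. p^i) {..k}"
    using p by (intro inj_onI) (metis prime_gt_1_nat power_inject_exp)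
  ultimately have "(\<Sum>d | d dvd p^k. f d) = (\<Sum>i\<le>k. f (p^i))" by (simp add: sum.reindex)
  then show ?thesis by (simp add: mult_power[OF mult one])
qed

lemma divsum_mult:
  fixes f :: "nat \<Rightarrow> 'a::comm_semiring_1"
  assumes mult: "\<And>x y. f (x*y) = f x * f y" and one: "f 1 = 1"
  shows "n > 0 \<Longrightarrow> (\<Sum>d | d dvd n. f d) = (\<Prod>p\<in>prime_factors n. \<Sum>k\<le>multiplicity p n. f p ^ k)"
proof (induction n rule: less_induct)
  case (less n)
  show ?case
  proof (cases "n = 1")
    case True
    then show ?thesis by (simp add: one[unfolded One_nat_def])
  next
    case False
    then obtain p where p: "prime p" "p dvd n" using prime_factor_nat by blast
    define k where "k = multiplicity p n"
    obtain n' where n': "n = p ^ k * n'" "\<not> p dvd n'"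
      using multiplicity_decompose'[of n p] less.prems p(1) unfolding k_def
      by (metis not_prime_unit not_gr0)
    have n'0: "n' > 0" using n' less.prems by (auto intro!: Nat.gr0I)
    have k0: "k > 0" using p less.prems unfolding k_def by (simp add: prime_multiplicity_gt_zero_iff)
    have "p ^ k > 1" using k0 p by (metis One_nat_def one_less_power prime_gt_1_nat)
    hence "n' < n" using n' n'0 by simp
    have cop: "coprime (p^k) n'" using p n'(2) by (simp add: prime_imp_coprime)
    have pfn: "prime_factors n = insert p (prime_factors n')"
      using n' n'0 k0 p by (simp add: prime_factors_product prime_factors_power prime_prime_factors)
    have pn': "p \<notin> prime_factors n'" using n'(2) by auto
    have mq: "multiplicity q n = multiplicity q n'" if q: "q \<in> prime_factors n'" for q
    proof -
      have qp: "prime q" using q by (auto simp: in_prime_factors_iff)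
      have "q \<noteq> p" using q pn' by auto
      hence "\<not> q dvd p ^ k" using qp p by (metis prime_dvd_power primes_dvd_imp_eq)
      hence "multiplicity q (p^k) = 0" by (rule not_dvd_imp_multiplicity_0)
      then show ?thesis using n' n'0 p qp
        by (simp add: prime_elem_multiplicity_mult_distrib)
    qed
    have "(\<Sum>d | d dvd n. f d) = (\<Sum>d | d dvd p^k. f d) * (\<Sum>d | d dvd n'. f d)"
      using n'(1) divsum_coprime[OF mult cop _ n'0] p by (simp add: prime_gt_0_nat)
    also have "(\<Sum>d | d dvd p^k. f d) = (\<Sum>i\<le>k. f p ^ i)" by (rule divsum_prime_power[OF mult one p(1)])
    also have "(\<Sum>d | d dvd n'. f d) = (\<Prod>q\<in>prime_factors n'. \<Sum>j\<le>multiplicity q n'. f q ^ j)"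
      using less.IH[OF \<open>n' < n\<close> n'0] .
    also have "\<dots> = (\<Prod>q\<in>prime_factors n'. \<Sum>j\<le>multiplicity q n. f q ^ j)"
      by (intro prod.cong refl) (simp add: mq)
    finally show ?thesis using pfn pn' by (simp add: k_def)
  qed
qed



lemma int_dvd_nat_abs: "int p dvd x \<longleftrightarrow> p dvd nat \<bar>x\<bar>"
proof -
  have "int p dvd x \<longleftrightarrow> int p dvd int (nat \<bar>x\<bar>)" by simp
  also have "\<dots> \<longleftrightarrow> p dvd nat \<bar>x\<bar>" by (rule int_dvd_int_iff)
  finally show ?thesis .
qed

lemma coprime_by_primes:
  fixes x :: nat and y :: int
  assumes "\<And>q. prime q \<Longrightarrow> q dvd x \<Longrightarrow> \<not> int q dvd y"
  shows "coprime (int x) y"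
proof (rule ccontr)
  assume nc: "\<not> coprime (int x) y"
  have g1: "gcd (int x) y \<noteq> 1" using nc by (simp add: coprime_iff_gcd_eq_1)
  have g0: "int (nat (gcd (int x) y)) = gcd (int x) y" by simp
  have "nat (gcd (int x) y) \<noteq> 1" using g1 g0 by (metis of_nat_1)
  then obtain p where p: "prime p" "p dvd nat (gcd (int x) y)" using prime_factor_nat by blast
  have "int p dvd int (nat (gcd (int x) y))" using p(2) int_dvd_int_iff by blast
  hence "int p dvd gcd (int x) y" using g0 by simp
  hence "int p dvd int x" and "int p dvd y" by auto
  then show False using assms[OF p(1)] int_dvd_int_iff by blast
qed

lemma kron_one_bot: "kronecker a 1 = 1"
  by (simp add: kronecker_def)

lemma m_part_pos: "m_part E m > 0"
  unfolding m_part_def by (intro prod_pos) (auto simp: in_prime_factors_iff prime_gt_0_nat)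

lemma mult_m_part:
  assumes "prime q"
  shows "multiplicity q (m_part E m) = (if q \<in> prime_factors (nat \<bar>E\<bar>) then multiplicity q (nat \<bar>m\<bar>) else 0)"
  unfolding m_part_def
  by (rule multiplicity_prod_prime_powers) (auto simp: assms in_prime_factors_iff)

lemma coprime_m_part:
  assumes "coprime E x"
  shows "coprime (int (m_part E m)) x"
proof (rule coprime_by_primes)
  fix q assume q: "prime q" "q dvd m_part E m"
  hence "multiplicity q (m_part E m) > 0"
    using m_part_pos[of E m] by (simp add: prime_multiplicity_gt_zero_iff)
  hence "q \<in> prime_factors (nat \<bar>E\<bar>)" using mult_m_part[OF q(1)] by (auto split: if_splits)
  hence "q dvd nat \<bar>E\<bar>" by (simp add: in_prime_factors_iff)
  hence "int q dvd E" using int_dvd_nat_abs by blast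
  moreover have "\<not> is_unit (int q)" using q(1) by simp (metis One_nat_def not_prime_1)
  ultimately show "\<not> int q dvd x" using assms coprime_common_divisor[of E x "int q"] by blast
qed

lemma not_unit_prime_int: "prime q \<Longrightarrow> \<not> is_unit (int q)"
  by simp (metis One_nat_def not_prime_1)

lemma perS:
  fixes D1 D2 N m :: int and s :: complex
  assumes D1: "D1 mod 4 = 1" and D2: "D2 mod 4 = 1" and cop: "coprime D1 D2" and m0: "m \<noteq> 0"
  shows "(\<Sum>d\<in>{d. d dvd m \<and> d > 0}. complex_of_int d powr s *
            of_int (kronecker D1 d * kronecker D2 (N * m div d)))
   = of_int (kronecker D1 (int (m_part D2 m))
       * kronecker D2 (N * (m div int (m_part D1 m * m_part D2 m)) * int (m_part D1 m)))
     * complex_of_nat (m_part D2 m) powr s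
     * (\<Prod>p\<in>{p\<in>prime_factors (nat \<bar>m\<bar>). \<not> int p dvd D1 * D2}.
          \<Sum>k\<le>multiplicity p (nat \<bar>m\<bar>).
            (of_int (kronecker (D1 * D2) (int p)) * complex_of_nat p powr s) ^ k)"
proof -
  define n where "n = nat \<bar>m\<bar>"
  define a where "a = m_part D1 m"
  define b where "b = m_part D2 m"
  define D where "D = D1 * D2"
  have n0: "n > 0" using m0 by (simp add: n_def)
  have a0: "a > 0" and b0: "b > 0" by (simp_all add: a_def b_def m_part_pos)
  have D10: "D1 \<noteq> 0" and D20: "D2 \<noteq> 0" using D1 D2 by auto
  have Dmod: "D mod 4 = 1" using D1 D2 by (simp add: D_def mod_mult_eq[symmetric])
  have Q1: "q \<in> prime_factors (nat \<bar>D1\<bar>) \<longleftrightarrow> int q dvd D1" if "prime q" for q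
    using that D10 int_dvd_nat_abs[of q D1] by (auto simp: in_prime_factors_iff)
  have Q2: "q \<in> prime_factors (nat \<bar>D2\<bar>) \<longleftrightarrow> int q dvd D2" if "prime q" for q
    using that D20 int_dvd_nat_abs[of q D2] by (auto simp: in_prime_factors_iff)
  have disj: "\<not> (int q dvd D1 \<and> int q dvd D2)" if "prime q" for q
    using cop coprime_common_divisor[of D1 D2 "int q"] not_unit_prime_int[OF that] by blast
  have ma: "multiplicity q a = (if int q dvd D1 then multiplicity q n else 0)" if "prime q" for q
    using mult_m_part[OF that, of D1 m] Q1[OF that] by (simp add: a_def n_def)
  have mb: "multiplicity q b = (if int q dvd D2 then multiplicity q n else 0)" if "prime q" for q
    using mult_m_part[OF that, of D2 m] Q2[OF that] by (simp add: b_def n_def)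
  have ab_dvd: "a * b dvd n"
  proof (rule multiplicity_le_imp_dvd)
    show "a * b \<noteq> 0" using a0 b0 by simp
    fix q :: nat assume q: "prime q"
    have "multiplicity q (a*b) = multiplicity q a + multiplicity q b"
      using a0 b0 q by (simp add: prime_elem_multiplicity_mult_distrib)
    then show "multiplicity q (a*b) \<le> multiplicity q n"
      using ma[OF q] mb[OF q] disj[OF q] by auto
  qed
  define c' where "c' = n div (a*b)"
  have nabc: "n = a * b * c'" using ab_dvd by (simp add: c'_def)
  have c'0: "c' > 0" using nabc n0 by (auto intro!: Nat.gr0I)
  have mc: "multiplicity q n = multiplicity q a + multiplicity q b + multiplicity q c'"
    if "prime q" for q
    using that a0 b0 c'0 nabc by (simp add: prime_elem_multiplicity_mult_distrib)
  define c where "c = m div int (a*b)"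
  have "int (a*b) dvd int n" using ab_dvd by (simp only: int_dvd_int_iff)
  hence "int (a*b) dvd m" using m0 by (simp add: n_def)
  hence mabc: "m = int a * int b * c" by (simp add: c_def)
  have "int (a*b) * int c' = int (a*b) * \<bar>c\<bar>"
  proof -
    have "int (a*b) * int c' = int n" by (simp add: nabc)
    also have "\<dots> = \<bar>m\<bar>" by (simp add: n_def)
    also have "\<dots> = int (a*b) * \<bar>c\<bar>" by (subst mabc) (simp add: abs_mult)
    finally show ?thesis .
  qed
  hence cc': "\<bar>c\<bar> = int c'" using a0 b0 by simp
  have mc'n: "multiplicity q c' = multiplicity q n" if "prime q" "\<not> int q dvd D" for q
  proof -
    have "\<not> int q dvd D1" "\<not> int q dvd D2" using that(2) unfolding D_def
      by (meson dvd_mult2 dvd_mult)+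
    then show ?thesis using mc[OF that(1)] ma[OF that(1)] mb[OF that(1)] by simp
  qed
  have nd: "\<not> q dvd c'" if "prime q" "int q dvd D" for q
  proof
    assume "q dvd c'"
    hence "multiplicity q c' > 0" using c'0 that(1) by (simp add: prime_multiplicity_gt_zero_iff)
    moreover have "int q dvd D1 \<or> int q dvd D2"
      using that by (simp add: D_def prime_dvd_mult_iff prime_nat_int_transfer)
    ultimately show False using mc[OF that(1)] ma[OF that(1)] mb[OF that(1)] disj[OF that(1)] by auto
  qed
  have copc: "coprime (int c') D" by (rule coprime_by_primes) (use nd in blast)
  have copc2: "coprime (int c') D2"
    using copc by (simp add: D_def)
  define F where "F = (\<lambda>d::int. complex_of_int d powr s * of_int (kronecker D1 d * kronecker D2 (N * m div d)))"
  define G where "G = (\<lambda>d::nat. of_int (kronecker D (int d)) * complex_of_nat d powr s)"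
  define K where "K = of_int (kronecker D1 (int b) * kronecker D2 (N * c * int a)) * complex_of_nat b powr s"
  have step1: "(\<Sum>d\<in>{d. d dvd m \<and> d > 0}. F d) = (\<Sum>d\<in>{d. d dvd n}. F (int d))"
  proof -
    have "{d. d dvd m \<and> d > 0} = int ` {d. d dvd n}"
    proof (intro equalityI subsetI)
      fix d assume "d \<in> {d. d dvd m \<and> d > 0}"
      hence d: "d dvd m" "d > 0" by auto
      have "int (nat d) dvd m" using d by simp
      hence "nat d dvd n" using int_dvd_nat_abs[of "nat d" m] unfolding n_def by blast
      then show "d \<in> int ` {d. d dvd n}" using d by (auto intro!: image_eqI[of _ _ "nat d"])
    next
      fix d assume "d \<in> int ` {d. d dvd n}"
      then obtain d' where d': "d = int d'" "d' dvd n" by auto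
      hence "d' > 0" using n0 by (auto intro!: Nat.gr0I)
      have "int d' dvd m" using d'(2) int_dvd_nat_abs[of d' m] unfolding n_def by blast
      then show "d \<in> {d. d dvd m \<and> d > 0}" using d'(1) \<open>d' > 0\<close> by simp
    qed
    then show ?thesis by (simp add: sum.reindex)
  qed
  have vanish: "F (int d) = 0" if d: "d dvd n" "d \<notin> (\<lambda>d0. b * d0) ` {d0. d0 dvd c'}" for d
  proof (rule ccontr)
    assume F0: "F (int d) \<noteq> 0"
    have d0: "d > 0" using d(1) n0 by (auto intro!: Nat.gr0I)
    have dm: "int d dvd m" using d(1) int_dvd_nat_abs[of d m] unfolding n_def by blast
    have k1: "kronecker D1 (int d) \<noteq> 0" and k2: "kronecker D2 (N * m div int d) \<noteq> 0"
      using F0 by (auto simp: F_def)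
    have cop1: "coprime D1 (int d)" using k1 kron_not_coprime[of "int d" D1] d0 by auto
    define e where "e = m div int d"
    have me: "m = int d * e" using dm by (simp add: e_def)
    have Nme: "N * m div int d = N * e" using dm unfolding e_def by (metis dvd_div_mult mult.commute)
    have cop2: "coprime D2 e"
    proof (cases "N * e = 0")
      case True
      hence "kronecker D2 0 \<noteq> 0" using k2 Nme by (metis mult_eq_0_iff)
      hence "\<bar>D2\<bar> = 1" using kron_zero by blast
      hence "D2 = 1 \<or> D2 = -1" by linarith
      then show ?thesis by auto
    next
      case False
      hence "coprime D2 (N * e)" using k2 Nme kron_not_coprime by metis
      then show ?thesis by simp
    qed
    have "coprime (int b) e" using coprime_m_part[OF cop2] by (simp add: b_def)
    moreover have "int b dvd int d * e" using mabc me by (metis dvd_triv_left mult.commute mult.left_commute)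
    ultimately have "int b dvd int d" using coprime_dvd_mult_left_iff by blast
    hence "b dvd d" by (simp only: int_dvd_int_iff)
    then obtain d1 where dd1: "d = b * d1" by blast
    have m1: "m = int b * int d1 * e" using me dd1 by simp
    have "int a * int b * c = int b * int d1 * e" using mabc m1 by metis
    hence "int d1 * e = int a * c" using b0 by (simp add: algebra_simps)
    hence "int d1 dvd int a * c" by (metis dvd_triv_left)
    moreover have "coprime (int a) (int d1)"
    proof -
      have "coprime (int a) (int d)" using coprime_m_part[OF cop1] by (simp add: a_def)
      then show ?thesis using dd1 by simp
    qed
    ultimately have "int d1 dvd c" by (simp add: coprime_commute coprime_dvd_mult_right_iff)
    hence "int d1 dvd \<bar>c\<bar>" by simp
    hence "d1 dvd c'" using cc' by (simp only: int_dvd_int_iff)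
    then show False using d(2) dd1 by blast
  qed
  have step2: "(\<Sum>d\<in>{d. d dvd n}. F (int d)) = (\<Sum>d\<in>(\<lambda>d0. b * d0) ` {d0. d0 dvd c'}. F (int d))"
  proof (rule sum.mono_neutral_right)
    show "finite {d. d dvd n}" using n0 by (rule finite_divisors_nat)
    show "(\<lambda>d0. b * d0) ` {d0. d0 dvd c'} \<subseteq> {d. d dvd n}"
      using nabc by (auto intro: mult_dvd_mono)
    show "\<forall>i\<in>{d. d dvd n} - (\<lambda>d0. b * d0) ` {d0. d0 dvd c'}. F (int i) = 0"
      using vanish by blast
  qed
  have step3: "(\<Sum>d\<in>(\<lambda>d0. b * d0) ` {d0. d0 dvd c'}. F (int d)) = (\<Sum>d0\<in>{d0. d0 dvd c'}. F (int (b * d0)))"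
    using b0 by (subst sum.reindex) (auto simp: inj_on_def)
  have step4: "F (int (b * d0)) = K * G d0" if d0: "d0 dvd c'" for d0
  proof -
    have d00: "d0 > 0" using d0 c'0 by (auto intro!: Nat.gr0I)
    have "int d0 dvd \<bar>c\<bar>" using d0 cc' by (simp only: int_dvd_int_iff)
    hence "int d0 dvd c" by simp
    then obtain e where ce: "c = int d0 * e" by blast
    have Nmd: "N * m div int (b * d0) = N * int a * e"
    proof -
      have eq: "N * m = int (b * d0) * (N * int a * e)" using mabc ce by (simp add: algebra_simps)
      have nz: "int (b * d0) \<noteq> 0" using b0 d00 by simp
      show ?thesis by (subst eq) (rule nonzero_mult_div_cancel_left[OF nz])
    qed
    have cd0: "coprime D2 (int d0)"
      using copc2 d0 by (meson coprime_commute coprime_divisors dvd_refl int_dvd_int_iff)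
    have sq: "kronecker D2 (int d0) * kronecker D2 (int d0) = 1"
      using kron_coprime_sq[OF cd0] by (simp add: power2_eq_square)
    have k2: "kronecker D2 (N * c * int a) = kronecker D2 (N * int a * e) * kronecker D2 (int d0)"
      using ce kron_mult_bot'[OF D2, of "N * int a * e" "int d0"] by (simp add: algebra_simps)
    have k2': "kronecker D2 (N * int a * e) = kronecker D2 (N * c * int a) * kronecker D2 (int d0)"
      using k2 sq by (metis mult.assoc mult.right_neutral)
    have k1: "kronecker D1 (int (b * d0)) = kronecker D1 (int b) * kronecker D1 (int d0)"
      using kron_mult_bot'[OF D1] by simp
    have kD: "kronecker D (int d0) = kronecker D1 (int d0) * kronecker D2 (int d0)"
      using kron_mult_top[OF D10 D20] by (simp add: D_def)
    have pw: "complex_of_int (int (b * d0)) powr s = complex_of_nat b powr s * complex_of_nat d0 powr s"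
      by (simp add: cpowr_mult_nat[symmetric])
    show ?thesis
      unfolding F_def K_def G_def Nmd pw k1 k2' kD by (simp add: algebra_simps)
  qed
  have Gmult: "G (x * y) = G x * G y" for x y
  proof -
    have pw: "complex_of_nat (x*y) powr s = complex_of_nat x powr s * complex_of_nat y powr s"
      by (rule cpowr_mult_nat)
    have k: "kronecker D (int (x*y)) = kronecker D (int x) * kronecker D (int y)"
      using kron_mult_bot'[OF Dmod, of "int x" "int y"] by simp
    show ?thesis unfolding G_def pw k of_int_mult by (simp add: mult_ac)
  qed
  have G1: "G 1 = 1" by (simp add: G_def kron_one_bot)
  have step5: "(\<Sum>d0\<in>{d0. d0 dvd c'}. G d0) = (\<Prod>p\<in>prime_factors c'. \<Sum>k\<le>multiplicity p c'. G p ^ k)"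
    using divsum_mult[OF Gmult G1 c'0] by simp
  have pfc: "prime_factors c' = {p\<in>prime_factors n. \<not> int p dvd D}"
  proof (intro equalityI subsetI)
    fix p assume p: "p \<in> prime_factors c'"
    hence pp: "prime p" and pc: "p dvd c'" by (auto simp: in_prime_factors_iff)
    have "p dvd n" using pc nabc by simp
    moreover have "\<not> int p dvd D" using nd[OF pp] pc by blast
    ultimately show "p \<in> {p\<in>prime_factors n. \<not> int p dvd D}" using pp n0 by (auto simp: in_prime_factors_iff)
  next
    fix p assume p: "p \<in> {p\<in>prime_factors n. \<not> int p dvd D}"
    hence pp: "prime p" and pn: "p dvd n" and pD: "\<not> int p dvd D" by (auto simp: in_prime_factors_iff)
    have "multiplicity p n > 0" using pp pn n0 by (simp add: prime_multiplicity_gt_zero_iff)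
    hence "multiplicity p c' > 0" using mc'n[OF pp pD] by simp
    hence "p dvd c'" using pp c'0 by (simp add: prime_multiplicity_gt_zero_iff)
    then show "p \<in> prime_factors c'" using pp c'0 by (auto simp: in_prime_factors_iff)
  qed
  have step6: "(\<Prod>p\<in>prime_factors c'. \<Sum>k\<le>multiplicity p c'. G p ^ k)
      = (\<Prod>p\<in>{p\<in>prime_factors n. \<not> int p dvd D}. \<Sum>k\<le>multiplicity p n. G p ^ k)"
    unfolding pfc by (intro prod.cong refl) (auto simp: mc'n in_prime_factors_iff)
  have "(\<Sum>d\<in>{d. d dvd m \<and> d > 0}. F d) = (\<Sum>d0\<in>{d0. d0 dvd c'}. K * G d0)"
    using step1 step2 step3 step4 by simp
  also have "\<dots> = K * (\<Sum>d0\<in>{d0. d0 dvd c'}. G d0)" by (simp add: sum_distrib_left)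
  also have "\<dots> = K * (\<Prod>p\<in>{p\<in>prime_factors n. \<not> int p dvd D}. \<Sum>k\<le>multiplicity p n. G p ^ k)"
    using step5 step6 by simp
  finally show ?thesis
    unfolding F_def K_def G_def c_def a_def b_def D_def n_def by (simp add: mult.assoc)
qed



lemma mod4_abs_eq:
  fixes x y :: int
  assumes "x mod 4 = 1" "y mod 4 = 1" "\<bar>x\<bar> = \<bar>y\<bar>"
  shows "x = y"
proof -
  have "x = y \<or> x = - y" using assms(3) by (auto simp: abs_if split: if_splits)
  moreover have "x \<noteq> - y" using assms(1,2) by presburger
  ultimately show ?thesis by blast
qed

lemma dp_mod4: assumes "prime p" "p \<noteq> 2" shows "disc_part p mod 4 = 1"
proof -
  have "p > 2" using prime_ge_2_nat[OF assms(1)] assms(2) by linarith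
  hence "odd p" using prime_odd_nat[OF assms(1)] by blast
  hence "odd (int p)" by simp
  hence o: "int p mod 4 = 1 \<or> int p mod 4 = 3" by presburger
  show ?thesis
  proof (cases "int p mod 4 = 1")
    case True then show ?thesis by (simp add: disc_part_def)
  next
    case False
    hence "int p mod 4 = 3" using o by simp
    hence "(- int p) mod 4 = 1" by presburger
    then show ?thesis using False by (simp add: disc_part_def)
  qed
qed

lemma dp_abs: "\<bar>disc_part p\<bar> = int p"
  by (simp add: disc_part_def)

lemma dp_nz: "prime p \<Longrightarrow> disc_part p \<noteq> 0"
  by (simp add: disc_part_def prime_gt_0_nat)

lemma prod_mod4:
  fixes f :: "'a \<Rightarrow> int"
  shows "finite S \<Longrightarrow> (\<And>x. x \<in> S \<Longrightarrow> f x mod 4 = 1) \<Longrightarrow> (\<Prod>x\<in>S. f x) mod 4 = 1"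
proof (induction S rule: finite_induct)
  case (insert x F)
  have "(f x * prod f F) mod 4 = ((f x mod 4) * (prod f F mod 4)) mod 4" by (simp add: mod_mult_eq)
  then show ?case using insert by simp
qed simp

lemma prod_kron:
  "finite S \<Longrightarrow> (\<And>p. p \<in> S \<Longrightarrow> prime p) \<Longrightarrow>
    (\<Prod>p\<in>S. kronecker (disc_part p) x) = kronecker (\<Prod>p\<in>S. disc_part p) x"
proof (induction S rule: finite_induct)
  case empty then show ?case by (simp add: kron_one)
next
  case (insert q F)
  have "(\<Prod>p\<in>F. disc_part p) \<noteq> 0" using insert dp_nz by (simp add: prod_zero_iff)
  moreover have "disc_part q \<noteq> 0" using insert dp_nz by simp
  ultimately show ?case using insert by (simp add: kron_mult_top)
qed

lemma abs_prod_dp: "finite S \<Longrightarrow> \<bar>\<Prod>p\<in>S. disc_part p\<bar> = int (\<Prod>p\<in>S. p)"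
  by (simp add: abs_prod dp_abs)

lemma sqf_nat_abs: assumes "squarefree (E::int)" shows "squarefree (nat \<bar>E\<bar>)"
  unfolding squarefree_def
proof (intro allI impI)
  fix x :: nat assume "x ^ 2 dvd nat \<bar>E\<bar>"
  hence "int (x ^ 2) dvd int (nat \<bar>E\<bar>)" by (simp only: int_dvd_int_iff)
  hence "int x ^ 2 dvd E" by simp
  hence "int x dvd 1" using assms unfolding squarefree_def by blast
  then show "x dvd 1" by simp
qed

lemma sqf_prod:
  assumes "squarefree (E::int)"
  shows "(\<Prod>p\<in>prime_factors (nat \<bar>E\<bar>). p) = nat \<bar>E\<bar>"
proof -
  have sq: "squarefree (nat \<bar>E\<bar>)" using sqf_nat_abs[OF assms] .
  have E0: "nat \<bar>E\<bar> \<noteq> 0" using sq by auto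
  have "(\<Prod>p\<in>prime_factors (nat \<bar>E\<bar>). p) = (\<Prod>p\<in>prime_factors (nat \<bar>E\<bar>). p ^ multiplicity p (nat \<bar>E\<bar>))"
    using squarefree_factorial_semiring'[OF E0] sq by (intro prod.cong refl) auto
  also have "\<dots> = nat \<bar>E\<bar>" using prod_prime_factors[OF E0] by simp
  finally show ?thesis .
qed

lemma sqf_coprime:
  assumes "squarefree (a * b :: int)"
  shows "coprime a b"
proof -
  have "gcd a b ^ 2 dvd a * b" by (simp add: power2_eq_square mult_dvd_mono)
  hence "is_unit (gcd a b)" using assms unfolding squarefree_def by blast
  then show ?thesis using is_unit_gcd by blast
qed

lemma pf_prod_primes:
  assumes "finite S" "\<And>p. p \<in> S \<Longrightarrow> prime (p::nat)"
  shows "prime_factors (\<Prod>p\<in>S. p) = S"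
proof -
  have n0: "0 \<notin> S"
  proof
    assume "0 \<in> S"
    then have "prime (0::nat)" by (rule assms(2))
    then show False by simp
  qed
  have pos: "(\<Prod>p\<in>S. p) \<noteq> 0"
  proof
    assume "(\<Prod>p\<in>S. p) = 0"
    then obtain a where "a \<in> S" "a = 0" using prod_zero_iff[OF assms(1), of "\<lambda>p. p"] by blast
    then show False using n0 by simp
  qed
  show ?thesis
  proof (intro equalityI subsetI)
    fix q assume qin: "q \<in> prime_factors (\<Prod>p\<in>S. p)"
    have q1: "prime q" using in_prime_factors_imp_prime[OF qin] .
    have q2: "q dvd (\<Prod>p\<in>S. p)" using in_prime_factors_imp_dvd[OF qin] .
    have "\<exists>p\<in>S. q dvd p" using prime_dvd_prod_iff[OF assms(1) q1, of "\<lambda>p. p"] q2 by simp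
    then obtain p where p: "p \<in> S" "q dvd p" by blast
    have "q = p" using primes_dvd_imp_eq[OF q1 assms(2)[OF p(1)] p(2)] .
    then show "q \<in> S" using p(1) by simp
  next
    fix q assume qS: "q \<in> S"
    have q1: "prime q" using assms(2)[OF qS] .
    have q2: "q dvd (\<Prod>p\<in>S. p)" using dvd_prodI[of S q "\<lambda>p. p", OF assms(1) qS] .
    show "q \<in> prime_factors (\<Prod>p\<in>S. p)" by (rule prime_factorsI[OF pos q1 q2])
  qed
qed



lemma main_gen:
  fixes D m N :: int and s :: complex
  assumes Dg1: "D > 1" and sqD: "squarefree D" and Dm: "D mod 4 = 1" and m0: "m \<noteq> 0"
  shows "(\<Sum>d\<in>{d. d dvd m \<and> d > 0}. complex_of_int d powr s *
            (\<Prod>p\<in>prime_factors (nat D).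
               of_int (kronecker (disc_part p) d + kronecker (disc_part p) (N * m div d))))
       = (\<Sum>(D1, D2)\<in>{(D1, D2). D1 * D2 = D \<and> D1 mod 4 = 1 \<and> D2 mod 4 = 1}.
            of_int (kronecker D1 (int (m_part D2 m))
                    * kronecker D2 (N * (m div int (m_part D1 m * m_part D2 m)) * int (m_part D1 m)))
            * complex_of_nat (m_part D2 m) powr s
            * (\<Prod>p\<in>{p\<in>prime_factors (nat \<bar>m\<bar>). \<not> int p dvd D}.
                 \<Sum>k\<le>multiplicity p (nat \<bar>m\<bar>).
                   (of_int (kronecker D (int p)) * complex_of_nat p powr s) ^ k))"
    (is "?L = (\<Sum>(D1, D2)\<in>?T. ?H D1 D2)")
proof -
  define P where "P = prime_factors (nat D)"
  define A where "A = (\<lambda>S. \<Prod>p\<in>S. disc_part p)"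
  define Dv where "Dv = {d. d dvd m \<and> d > 0}"
  have finP: "finite P" by (simp add: P_def)
  have Pprime: "prime p" if "p \<in> P" for p using that by (auto simp: P_def in_prime_factors_iff)
  have absD: "nat \<bar>D\<bar> = nat D" using Dg1 by simp
  have P2: "p \<noteq> 2" if "p \<in> P" for p
  proof
    assume "p = 2"
    hence "2 dvd nat \<bar>D\<bar>" using that absD by (auto simp: P_def in_prime_factors_iff)
    hence "int 2 dvd D" using int_dvd_nat_abs[of 2 D] by blast
    then show False using Dm by presburger
  qed
  have Amod: "A S mod 4 = 1" if "S \<subseteq> P" for S
    unfolding A_def using that finite_subset[OF that finP]
    by (intro prod_mod4) (auto intro!: dp_mod4 Pprime P2)
  have AP: "A P = D"
  proof (rule mod4_abs_eq)
    show "A P mod 4 = 1" by (rule Amod) simp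
    show "D mod 4 = 1" by (rule Dm)
    have "\<bar>A P\<bar> = int (\<Prod>p\<in>P. p)" unfolding A_def by (rule abs_prod_dp[OF finP])
    also have "(\<Prod>p\<in>P. p) = nat \<bar>D\<bar>" unfolding P_def absD[symmetric] by (rule sqf_prod[OF sqD])
    finally show "\<bar>A P\<bar> = \<bar>D\<bar>" by simp
  qed
  have Asplit: "A S * A (P - S) = D" if "S \<subseteq> P" for S
  proof -
    have "A P = A (P - S) * A S" unfolding A_def by (rule prod.subset_diff[OF that finP])
    then show ?thesis using AP by (simp add: mult.commute)
  qed
  have Acop: "coprime (A S) (A (P - S))" if "S \<subseteq> P" for S
    using sqf_coprime[of "A S" "A (P - S)"] Asplit[OF that] sqD by simp
  have stepA: "(\<Prod>p\<in>P. complex_of_int (kronecker (disc_part p) d + kronecker (disc_part p) x))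
      = (\<Sum>S\<in>Pow P. complex_of_int (kronecker (A S) d * kronecker (A (P - S)) x))" for d x
  proof -
    have "(\<Prod>p\<in>P. complex_of_int (kronecker (disc_part p) d + kronecker (disc_part p) x))
        = complex_of_int (\<Prod>p\<in>P. kronecker (disc_part p) d + kronecker (disc_part p) x)"
      by (rule of_int_prod[symmetric])
    also have "(\<Prod>p\<in>P. kronecker (disc_part p) d + kronecker (disc_part p) x)
        = (\<Sum>S\<in>Pow P. (\<Prod>p\<in>S. kronecker (disc_part p) d) * (\<Prod>p\<in>P - S. kronecker (disc_part p) x))"
      by (rule prod_add[OF finP])
    also have "\<dots> = (\<Sum>S\<in>Pow P. kronecker (A S) d * kronecker (A (P - S)) x)"
    proof (intro sum.cong refl)
      fix S assume S: "S \<in> Pow P"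
      have fS: "finite S" using S finP by (auto intro: finite_subset)
      have "(\<Prod>p\<in>S. kronecker (disc_part p) d) = kronecker (A S) d"
        unfolding A_def using S by (intro prod_kron fS) (auto intro: Pprime)
      moreover have "(\<Prod>p\<in>P - S. kronecker (disc_part p) x) = kronecker (A (P - S)) x"
        unfolding A_def using finP by (intro prod_kron) (auto intro: Pprime)
      ultimately show "(\<Prod>p\<in>S. kronecker (disc_part p) d) * (\<Prod>p\<in>P - S. kronecker (disc_part p) x)
          = kronecker (A S) d * kronecker (A (P - S)) x" by simp
    qed
    finally show ?thesis by (simp add: of_int_sum)
  qed
  have "?L = (\<Sum>d\<in>Dv. \<Sum>S\<in>Pow P. complex_of_int d powr s *
                complex_of_int (kronecker (A S) d * kronecker (A (P - S)) (N * m div d)))"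
    unfolding Dv_def P_def[symmetric] stepA by (simp add: sum_distrib_left)
  also have "\<dots> = (\<Sum>S\<in>Pow P. \<Sum>d\<in>Dv. complex_of_int d powr s *
                complex_of_int (kronecker (A S) d * kronecker (A (P - S)) (N * m div d)))"
    by (rule sum.swap)
  also have "\<dots> = (\<Sum>(D1, D2)\<in>?T. ?H D1 D2)"
  proof (rule sum.reindex_bij_witness[where j = "\<lambda>S. (A S, A (P - S))"
        and i = "\<lambda>(D1, D2). prime_factors (nat \<bar>D1\<bar>)"])
    fix S assume S: "S \<in> Pow P"
    hence SP: "S \<subseteq> P" by simp
    have fS: "finite S" using SP finP by (auto intro: finite_subset)
    have "nat \<bar>A S\<bar> = (\<Prod>p\<in>S. p)" by (simp only: A_def abs_prod_dp[OF fS] nat_int)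
    then show "(\<lambda>(D1, D2). prime_factors (nat \<bar>D1\<bar>)) (A S, A (P - S)) = S"
      using pf_prod_primes[OF fS] SP Pprime by auto
    show "(A S, A (P - S)) \<in> ?T" using Asplit[OF SP] Amod[OF SP] Amod[of "P - S"] by auto
    have e: "(\<Sum>d\<in>Dv. complex_of_int d powr s *
                complex_of_int (kronecker (A S) d * kronecker (A (P - S)) (N * m div d))) = ?H (A S) (A (P - S))"
      unfolding Dv_def
      using perS[where N=N and s=s, OF Amod[OF SP] Amod[of "P - S"] Acop[OF SP] m0, unfolded Asplit[OF SP]]
      by simp
    then show "(\<lambda>(D1, D2). ?H D1 D2) (A S, A (P - S)) = (\<Sum>d\<in>Dv. complex_of_int d powr s *
                complex_of_int (kronecker (A S) d * kronecker (A (P - S)) (N * m div d)))"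
      by simp
  next
    fix b assume b: "b \<in> ?T"
    then obtain D1 D2 where bb: "b = (D1, D2)" "D1 * D2 = D" "D1 mod 4 = 1" "D2 mod 4 = 1" by auto
    define S where "S = prime_factors (nat \<bar>D1\<bar>)"
    have sq1: "squarefree D1" using sqD bb(2) squarefree_multD(1) by blast
    have D10: "D1 \<noteq> 0" using bb(3) by auto
    have "nat D = nat \<bar>D1\<bar> * nat \<bar>D2\<bar>" using bb(2) absD by (metis nat_abs_mult_distrib)
    hence "nat \<bar>D1\<bar> dvd nat D" by simp
    hence SP: "S \<subseteq> P" unfolding S_def P_def using Dg1 by (intro dvd_prime_factors) auto
    show "(\<lambda>(D1, D2). prime_factors (nat \<bar>D1\<bar>)) b \<in> Pow P" using SP bb(1) S_def by simp
    have fS: "finite S" by (simp add: S_def)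
    have "\<bar>A S\<bar> = int (\<Prod>p\<in>S. p)" unfolding A_def by (rule abs_prod_dp[OF fS])
    also have "(\<Prod>p\<in>S. p) = nat \<bar>D1\<bar>" unfolding S_def by (rule sqf_prod[OF sq1])
    finally have "\<bar>A S\<bar> = \<bar>D1\<bar>" by simp
    hence AS: "A S = D1" using mod4_abs_eq[OF Amod[OF SP] bb(3)] by simp
    have "A S * A (P - S) = D1 * D2" using Asplit[OF SP] bb(2) by simp
    hence "A (P - S) = D2" using AS D10 by simp
    then show "(\<lambda>S. (A S, A (P - S))) ((\<lambda>(D1, D2). prime_factors (nat \<bar>D1\<bar>)) b) = b"
      using AS bb(1) S_def by simp
  qed
  finally show ?thesis .
qed

theorem lemma7p5:
  fixes D m :: int and \<aa> :: "real set" and s :: complex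
  assumes "D > 1" and "squarefree D" and "D mod 4 = 1"
    and "m \<noteq> 0"
    and "is_ideal (OK D) \<aa>" and "\<aa> \<noteq> {0}" and "coprime_to_disc D \<aa>"
  shows "(\<Sum>d\<in>{d. d dvd m \<and> d > 0}. complex_of_int d powr s *
            (\<Prod>p\<in>prime_factors (nat D).
               of_int (kronecker (disc_part p) d
                       + kronecker (disc_part p) (int (ideal_norm (OK D) \<aa>) * m div d))))
       = (\<Sum>(D1, D2)\<in>{(D1, D2). D1 * D2 = D \<and> D1 mod 4 = 1 \<and> D2 mod 4 = 1}.
            of_int (kronecker D1 (int (m_part D2 m))
                    * kronecker D2 (int (ideal_norm (OK D) \<aa>)
                                    * (m div int (m_part D1 m * m_part D2 m))
                                    * int (m_part D1 m)))
            * complex_of_nat (m_part D2 m) powr s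
            * (\<Prod>p\<in>{p\<in>prime_factors (nat \<bar>m\<bar>). \<not> int p dvd D}.
                 \<Sum>k\<le>multiplicity p (nat \<bar>m\<bar>).
                   (of_int (kronecker D (int p)) * complex_of_nat p powr s) ^ k))"
  by (rule main_gen[OF assms(1) assms(2) assms(3) assms(4)])

end
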